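(* Let $s\in(0,1)$ and $F\in\mathcal M_s$. Suppose that for some $\gamma>0$ one has $\int_\gamma F(x)x^k=0$ for all $k\in\mathbb Z_{\ge0}$. Then $F=0$.
   Context: Fix $q\in(0,1)$. Notation: $(a;q)_\infty=\prod_{j\ge0}(1-aq^j)$, $e_q(x)=1/(x;q)_\infty$. For $\gamma>0$, $\int_\gamma f=(1-q)\sum_{k\in\mathbb Z}\sum_{\epsilon=\pm1}q^k\gamma f(\epsilon q^k\gamma)$ whenever absolutely convergent. For $s>0$, $\mathcal M_s$ is the set of functions $F(x)=f(x)e_{q^2}(-x^2)$ (holomorphic on $|\mathrm{Im}\,x|<1$) where $f(x)=\sum_{l\ge0}a_lx^l$ with $|a_l|\le Cs^lq^{l^2/2}$ for all $l$, for some $C>0$. *)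

theory Defs
  imports "HOL-Analysis.Analysis"
begin

definition qpoch_inf :: "complex \<Rightarrow> real \<Rightarrow> complex" where
  "qpoch_inf a q = (\<Prod>j. 1 - a * of_real (q ^ j))"

definition e_q :: "real \<Rightarrow> complex \<Rightarrow> complex" where
  "e_q q x = 1 / qpoch_inf x q"

text \<open>The q-integral (1-q) sum_{k in Z} sum_{eps = +-1} q^k gamma f(eps q^k gamma)
  converges absolutely (unconditionally) with value I.\<close>
definition qint_has :: "real \<Rightarrow> real \<Rightarrow> (complex \<Rightarrow> complex) \<Rightarrow> complex \<Rightarrow> bool" where
  "qint_has q \<gamma> f I \<longleftrightarrow>
     ((\<lambda>(k::int, \<epsilon>::real). of_real ((1 - q) * q powi k * \<gamma>) * f (of_real (\<epsilon> * q powi k * \<gamma>)))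
        has_sum I) (UNIV \<times> {-1, 1})"

definition M_s :: "real \<Rightarrow> real \<Rightarrow> (complex \<Rightarrow> complex) set" where
  "M_s q s = {F. \<exists>(a::nat \<Rightarrow> complex) (C::real). C > 0 \<and>
      (\<forall>l. norm (a l) \<le> C * s ^ l * q powr (real l ^ 2 / 2)) \<and>
      (\<forall>x. \<bar>Im x\<bar> < 1 \<longrightarrow> F x = (\<Sum>l. a l * x ^ l) * e_q (q^2) (- (x^2)))}"

end

theory Submission
  imports Defs "HOL-Complex_Analysis.Complex_Analysis"
begin


lemma prod_one_plus_le_exp:
  fixes x :: "nat \<Rightarrow> real"
  assumes "\<And>i. i \<in> A \<Longrightarrow> 0 \<le> x i"
  shows "(\<Prod>i\<in>A. 1 + x i) \<le> exp (\<Sum>i\<in>A. x i)"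
proof (cases "finite A")
  case True then show ?thesis using assms
  proof (induction A rule: finite_induct)
    case empty then show ?case by simp
  next
    case (insert a A)
    have "(\<Prod>i\<in>insert a A. 1 + x i) = (1 + x a) * (\<Prod>i\<in>A. 1 + x i)" using insert by simp
    also have "\<dots> \<le> exp (x a) * exp (\<Sum>i\<in>A. x i)"
      apply (rule mult_mono) using insert by (auto intro: prod_nonneg)
    also have "\<dots> = exp (\<Sum>i\<in>insert a A. x i)" using insert by (simp add: exp_add)
    finally show ?case .
  qed
qed simp

lemma one_minus_ge_exp:
  fixes x q :: real
  assumes "0 \<le> x" "x \<le> q" "q < 1"
  shows "exp (- x / (1 - q)) \<le> 1 - x"
proof -
  define t where "t = x / (1 - x)"
  have x1: "x < 1" using assms by simp
  have t0: "0 \<le> t" using assms x1 by (simp add: t_def)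
  have "1 + t \<le> exp t" by simp
  hence "exp (-t) * (1 + t) \<le> exp (-t) * exp t" by (simp add: mult_left_mono)
  also have "exp (-t) * exp t = 1" by (simp flip: exp_add)
  finally have "exp (-t) * (1 + t) \<le> 1" .
  moreover have "1 + t = 1 / (1 - x)" using x1 by (simp add: t_def field_simps)
  ultimately have "exp (-t) \<le> 1 - x" using x1 by (simp add: field_simps)
  moreover have "x / (1 - q) \<ge> t" unfolding t_def
    using assms x1 by (intro divide_left_mono) auto
  hence "exp (- x / (1 - q)) \<le> exp (-t)" by simp
  ultimately show ?thesis by linarith
qed

lemma prod_one_minus_ge_exp:
  fixes x :: "nat \<Rightarrow> real"
  assumes "\<And>i. i \<in> A \<Longrightarrow> 0 \<le> x i" "\<And>i. i \<in> A \<Longrightarrow> x i \<le> q" "q < 1"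
  shows "exp (- (\<Sum>i\<in>A. x i) / (1 - q)) \<le> (\<Prod>i\<in>A. 1 - x i)"
proof (cases "finite A")
  case True then show ?thesis using assms
  proof (induction A rule: finite_induct)
    case empty then show ?case by simp
  next
    case (insert a A)
    have "exp (- (\<Sum>i\<in>insert a A. x i) / (1 - q)) = exp (- x a / (1 - q)) * exp (- (\<Sum>i\<in>A. x i) / (1 - q))"
    proof -
      have "- (\<Sum>i\<in>insert a A. x i) / (1 - q) = - x a / (1 - q) + - (\<Sum>i\<in>A. x i) / (1 - q)"
        using insert by (simp add: diff_divide_distrib)
      thus ?thesis by (metis exp_add)
    qed
    also have "\<dots> \<le> (1 - x a) * (\<Prod>i\<in>A. 1 - x i)"
      apply (rule mult_mono) using insert one_minus_ge_exp apply auto by (smt (verit))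
    also have "\<dots> = (\<Prod>i\<in>insert a A. 1 - x i)" using insert by simp
    finally show ?case .
  qed
qed simp

lemma geom_partial_le:
  fixes q :: real assumes "0 \<le> q" "q < 1"
  shows "(\<Sum>i<n. q ^ i) \<le> 1 / (1 - q)"
proof -
  have "q \<noteq> 1" using assms by simp
  hence "(\<Sum>i<n. q ^ i) = (1 - q ^ n) / (1 - q)" using sum_gp_strict[of q n] by simp
  also have "\<dots> \<le> 1 / (1 - q)" using assms by (intro divide_right_mono) auto
  finally show ?thesis .
qed

lemma summable_qsq:
  fixes q R :: real assumes "0 < q" "q < 1" "0 \<le> R"
  shows "summable (\<lambda>j. q ^ (j * j) * R ^ j)"
proof (rule summable_comparison_test_ev)
  have "(\<lambda>j. q ^ j * R) \<longlonglongrightarrow> 0 * R"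
    by (intro tendsto_intros) (use assms in auto)
  hence "eventually (\<lambda>j. q ^ j * R < 1/2) sequentially"
    by (intro order_tendstoD) auto
  thus "eventually (\<lambda>j. norm (q ^ (j * j) * R ^ j) \<le> (1/2) ^ j) sequentially"
  proof eventually_elim
    case (elim j)
    have "norm (q ^ (j * j) * R ^ j) = (q ^ j * R) ^ j"
      using assms by (simp add: power_mult power_mult_distrib abs_mult)
    also have "\<dots> \<le> (1/2) ^ j" using elim assms by (intro power_mono) auto
    finally show ?case .
  qed
  show "summable (\<lambda>j. (1/2::real) ^ j)" by simp
qed



lemma sum_double_lessThan: "(\<Sum>N<Suc m. 2*N) = Suc m * m"
  by (induction m) auto

lemma newton_series_zero:
  fixes q C :: real and c t :: "nat \<Rightarrow> complex"
  assumes q: "0 < q" "q < 1"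
    and cb: "\<And>j. norm (c j) \<le> C * q ^ (j*j)"
    and tb: "\<And>i. norm (t i) \<le> q ^ i"
    and zeros: "\<And>N. (\<Sum>j. c j * (\<Prod>i<j. complex_of_real ((1/q)^(2*N)) - t i)) = 0"
  shows "(\<Sum>j. c j * (\<Prod>i<j. z - t i)) = 0"
proof -
  define Q where "Q = 1/q"
  have Q1: "1 < Q" using q by (simp add: Q_def)
  have Qq: "Q ^ k * q ^ k = 1" for k using q by (simp add: Q_def power_one_over)
  define E where "E = exp (1 / (1 - q))"
  have E0: "0 < E" by (simp add: E_def)
  have C0: "0 \<le> C" using cb[of 0] norm_ge_zero[of "c 0"] by (simp del: norm_ge_zero)
  have pb: "norm (\<Prod>i<j. w - t i) \<le> R ^ j * E" if "1 \<le> R" "norm w \<le> R" for w R j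
  proof -
    have "norm (\<Prod>i<j. w - t i) = (\<Prod>i<j. norm (w - t i))" by (simp add: prod_norm)
    also have "\<dots> \<le> (\<Prod>i<j. R * (1 + q ^ i))"
    proof (rule prod_mono)
      fix i assume "i \<in> {..<j}"
      have "norm (w - t i) \<le> norm w + norm (t i)" by (rule norm_triangle_ineq4)
      also have "\<dots> \<le> R + q ^ i" using that tb[of i] by simp
      also have "\<dots> \<le> R * (1 + q ^ i)" using that q mult_right_mono[of 1 R "q^i"] by (simp add: algebra_simps)
      finally show "0 \<le> norm (w - t i) \<and> norm (w - t i) \<le> R * (1 + q ^ i)" by simp
    qed
    also have "\<dots> = R ^ j * (\<Prod>i<j. 1 + q ^ i)" by (simp add: prod.distrib)
    also have "\<dots> \<le> R ^ j * exp (\<Sum>i<j. q ^ i)"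
      using that q by (intro mult_left_mono prod_one_plus_le_exp) auto
    also have "\<dots> \<le> R ^ j * E" unfolding E_def
      using that q geom_partial_le[of q j] by (intro mult_left_mono) auto
    finally show ?thesis .
  qed
  have tbnd: "norm (c j * (\<Prod>i<j. w - t i)) \<le> C * E * (q ^ (j*j) * R ^ j)" if "1 \<le> R" "norm w \<le> R" for w R j
  proof -
    have "norm (c j * (\<Prod>i<j. w - t i)) = norm (c j) * norm (\<Prod>i<j. w - t i)" by (simp add: norm_mult)
    also have "\<dots> \<le> (C * q ^ (j*j)) * (R ^ j * E)"
      by (intro mult_mono cb pb that) (use C0 q in auto)
    finally show ?thesis by (simp add: algebra_simps)
  qed
  define K where "K = (\<lambda>w. \<Sum>j. c j * (\<Prod>i<j. w - t i))"
  have summM: "summable (\<lambda>j. C * E * (q ^ (j*j) * R ^ j))" if "0 \<le> R" for R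
    by (intro summable_mult summable_qsq) (use q that in auto)
  have Kb: "norm (K w) \<le> C * E * (\<Sum>j. q ^ (j*j) * R ^ j)" if "1 \<le> R" "norm w \<le> R" for w R
  proof -
    have s1: "summable (\<lambda>j. norm (c j * (\<Prod>i<j. w - t i)))"
      by (rule summable_comparison_test[OF _ summM[of R]]) (use tbnd that in auto)
    have "norm (K w) \<le> (\<Sum>j. norm (c j * (\<Prod>i<j. w - t i)))"
      unfolding K_def by (rule summable_norm[OF s1])
    also have "\<dots> \<le> (\<Sum>j. C * E * (q ^ (j*j) * R ^ j))"
      by (intro suminf_le s1 summM) (use tbnd that in auto)
    also have "\<dots> = C * E * (\<Sum>j. q ^ (j*j) * R ^ j)"
      by (intro suminf_mult summable_qsq) (use q that in auto)
    finally show ?thesis .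
  qed
  have hol: "K holomorphic_on UNIV"
  proof (rule holomorphic_uniform_sequence[where f = "\<lambda>n w. \<Sum>j<n. c j * (\<Prod>i<j. w - t i)"])
    show "open (UNIV::complex set)" by simp
    show "(\<lambda>w. \<Sum>j<n. c j * (\<Prod>i<j. w - t i)) holomorphic_on UNIV" for n
      by (intro holomorphic_intros)
    fix x :: complex
    have nb: "norm w \<le> norm x + 1" if "w \<in> cball x 1" for w
      using that norm_triangle_sub[of w x] by (auto simp: dist_norm norm_minus_commute)
    have "uniform_limit (cball x 1) (\<lambda>n w. \<Sum>j<n. c j * (\<Prod>i<j. w - t i)) K sequentially"
      unfolding K_def
    proof (rule Weierstrass_m_test_ev)
      show "eventually (\<lambda>n. \<forall>w\<in>cball x 1. norm (c n * (\<Prod>i<n. w - t i)) \<le> C * E * (q ^ (n*n) * (norm x + 1) ^ n)) sequentially"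
        by (intro always_eventually allI ballI tbnd nb) auto
      show "summable (\<lambda>n. C * E * (q ^ (n*n) * (norm x + 1) ^ n))" by (intro summM) auto
    qed
    thus "\<exists>d. 0 < d \<and> cball x d \<subseteq> UNIV \<and> uniform_limit (cball x d) (\<lambda>n w. \<Sum>j<n. c j * (\<Prod>i<j. w - t i)) K sequentially"
      by (intro exI[of _ 1]) auto
  qed
  define v where "v N = complex_of_real (Q ^ (2*N))" for N
  have Kv: "K (v N) = 0" for N using zeros[of N] by (simp add: K_def v_def Q_def)
  have vinj: "v N = v M \<longleftrightarrow> N = M" for N M
  proof -
    have "v N = v M \<longleftrightarrow> Q^(2*N) = Q^(2*M)" unfolding v_def by (simp only: of_real_eq_iff)
    also have "\<dots> \<longleftrightarrow> 2*N = 2*M" using Q1 by (rule power_inject_exp)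
    finally show ?thesis by simp
  qed
  define g where "g = rec_nat K (\<lambda>n gn w. if w = v n then deriv gn (v n) else (gn w - gn (v n)) / (w - v n))"
  have g0: "g 0 = K" by (simp add: g_def)
  have gS: "g (Suc n) = (\<lambda>w. if w = v n then deriv (g n) (v n) else (g n w - g n (v n)) / (w - v n))" for n
    unfolding g_def by simp
  have fact: "g n holomorphic_on UNIV \<and> (\<forall>w. K w = (\<Prod>N<n. w - v N) * g n w)" for n
  proof (induction n)
    case 0 show ?case using hol by (simp add: g0)
  next
    case (Suc n)
    hence h: "g n holomorphic_on UNIV" and e: "\<And>w. K w = (\<Prod>N<n. w - v N) * g n w" by auto
    have "(\<Prod>N<n. v n - v N) \<noteq> 0" using vinj by auto
    moreover have "K (v n) = 0" by (rule Kv)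
    ultimately have gz: "g n (v n) = 0" using e[of "v n"] by simp
    have "g (Suc n) holomorphic_on UNIV" unfolding gS using pole_lemma_open[OF h, of "v n"] by simp
    moreover have "K w = (\<Prod>N<Suc n. w - v N) * g (Suc n) w" for w
    proof (cases "w = v n")
      case True thus ?thesis using Kv[of n] by simp
    next
      case False thus ?thesis using e[of w] gz by (simp add: gS field_simps)
    qed
    ultimately show ?case by auto
  qed
  define a where "a = norm z"
  define em where "em = exp (- 1 / (1 - q)^2)"
  define ea where "ea = exp (a / (1 - q))"
  define D where "D = ea * C * E * (2 / (1 - q))"
  have est: "norm (K z) * (Q ^ Suc m * em) \<le> D" if ra: "a < Q ^ (2*m+1)" for m
  proof -
    have Q0: "0 < Q" using Q1 by simp
    define r where "r = Q ^ (2*m+1)"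
    define X where "X = Q ^ (Suc m * m)"
    have r1: "1 \<le> r" unfolding r_def using Q1 by (intro one_le_power) auto
    have X0: "0 < X" using Q0 by (simp add: X_def)
    have normv: "norm (v N) = Q ^ (2*N)" for N using Q0 by (simp add: v_def norm_power)
    have vr: "Q ^ (2*N) < r" if "N < Suc m" for N
      unfolding r_def using Q1 that by (intro power_strict_increasing) auto
    define P where "P = (\<Prod>N<Suc m. r - Q ^ (2*N))"
    define S where "S = (\<Sum>j. q ^ (j*j) * r ^ j)"
    have P0: "0 < P" unfolding P_def using vr by (intro prod_pos) auto
    have Pi_low: "P \<le> norm (\<Prod>N<Suc m. w - v N)" if "norm w = r" for w
    proof -
      have "P \<le> (\<Prod>N<Suc m. norm (w - v N))" unfolding P_def
      proof (rule prod_mono)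
        fix N assume N: "N \<in> {..<Suc m}"
        have "r - Q^(2*N) = norm w - norm (v N)" using that by (simp add: normv)
        also have "\<dots> \<le> norm (w - v N)" by (rule norm_triangle_ineq2)
        finally show "0 \<le> r - Q ^ (2*N) \<and> r - Q ^ (2*N) \<le> norm (w - v N)" using vr[of N] N by auto
      qed
      thus ?thesis by (simp add: prod_norm)
    qed
    have gb: "norm (g (Suc m) z) \<le> C * E * S / P"
    proof (rule maximum_modulus_frontier[where S = "cball 0 r" and f = "g (Suc m)" and \<xi> = z])
      have h: "g (Suc m) holomorphic_on UNIV" using fact by blast
      show "g (Suc m) holomorphic_on interior (cball 0 r)" using h by (rule holomorphic_on_subset) auto
      show "continuous_on (closure (cball 0 r)) (g (Suc m))"
        using h holomorphic_on_imp_continuous_on continuous_on_subset by blast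
      show "bounded (cball (0::complex) r)" by simp
      show "z \<in> cball 0 r" using ra by (simp add: r_def a_def)
      fix w :: complex assume "w \<in> frontier (cball 0 r)"
      hence nw: "norm w = r" using r1 by (simp add: frontier_cball)
      have "K w = (\<Prod>N<Suc m. w - v N) * g (Suc m) w" using fact by blast
      hence "norm (K w) = norm (\<Prod>N<Suc m. w - v N) * norm (g (Suc m) w)" by (simp add: norm_mult)
      moreover have "norm (K w) \<le> C * E * S" unfolding S_def using Kb[of r w] r1 nw by simp
      moreover have "P * norm (g (Suc m) w) \<le> norm (\<Prod>N<Suc m. w - v N) * norm (g (Suc m) w)"
        using Pi_low[OF nw] by (intro mult_right_mono) auto
      ultimately have "P * norm (g (Suc m) w) \<le> C * E * S" by linarith
      thus "norm (g (Suc m) w) \<le> C * E * S / P" using P0 by (simp add: field_simps)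
    qed
    have Kz_eq: "norm (K z) = norm (\<Prod>N<Suc m. z - v N) * norm (g (Suc m) z)"
    proof -
      have "K z = (\<Prod>N<Suc m. z - v N) * g (Suc m) z" using fact by blast
      thus ?thesis by (simp only: norm_mult)
    qed
    have Pz: "norm (\<Prod>N<Suc m. z - v N) \<le> (\<Prod>N<Suc m. a + Q^(2*N))"
    proof -
      have "(\<Prod>N<Suc m. norm (z - v N)) \<le> (\<Prod>N<Suc m. a + Q^(2*N))"
      proof (rule prod_mono)
        fix N
        have "norm (z - v N) \<le> norm z + norm (v N)" by (rule norm_triangle_ineq4)
        thus "0 \<le> norm (z - v N) \<and> norm (z - v N) \<le> a + Q^(2*N)" by (simp add: a_def normv)
      qed
      thus ?thesis by (simp add: prod_norm)
    qed
    have sumX: "(\<Prod>N<Suc m. Q ^ (2*N)) = X"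
      unfolding X_def power_sum[symmetric] sum_double_lessThan ..
    have c_bound: "(\<Prod>N<Suc m. a + Q^(2*N)) \<le> X * ea"
    proof -
      have "(\<Prod>N<Suc m. a + Q^(2*N)) = (\<Prod>N<Suc m. Q^(2*N) * (1 + a * q^(2*N)))"
        by (intro prod.cong refl) (simp add: algebra_simps Qq)
      also have "\<dots> = X * (\<Prod>N<Suc m. 1 + a * q^(2*N))" by (simp only: prod.distrib sumX)
      also have "\<dots> \<le> X * exp (\<Sum>N<Suc m. a * q^(2*N))"
        using X0 q by (intro mult_left_mono prod_one_plus_le_exp) (auto simp: a_def)
      also have "\<dots> \<le> X * ea"
      proof -
        have "(\<Sum>N<Suc m. a * q^(2*N)) \<le> (\<Sum>N<Suc m. a * q^N)"
          using q by (intro sum_mono mult_left_mono power_decreasing) (auto simp: a_def)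
        also have "\<dots> = a * (\<Sum>N<Suc m. q^N)" by (simp only: sum_distrib_left)
        also have "\<dots> \<le> a * (1 / (1 - q))"
          using geom_partial_le[of q "Suc m"] q by (intro mult_left_mono) (auto simp: a_def)
        finally show ?thesis unfolding ea_def using X0 by (intro mult_left_mono) auto
      qed
      finally show ?thesis .
    qed
    have d_bound: "X * X * Q ^ Suc m * em \<le> P"
    proof -
      have "P = (\<Prod>N<Suc m. r * (1 - q ^ (2*m+1-2*N)))"
        unfolding P_def
      proof (intro prod.cong refl)
        fix N assume "N \<in> {..<Suc m}"
        hence "2*N + (2*m+1-2*N) = 2*m+1" by auto
        hence "r = Q^(2*N) * Q^(2*m+1-2*N)" unfolding r_def by (metis power_add)
        hence "r * q ^ (2*m+1-2*N) = Q^(2*N)" by (simp add: mult.assoc Qq)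
        thus "r - Q ^ (2*N) = r * (1 - q ^ (2*m+1-2*N))" by (simp add: algebra_simps)
      qed
      also have "\<dots> = r ^ Suc m * (\<Prod>N<Suc m. 1 - q ^ (2*m+1-2*N))"
        by (simp add: prod.distrib)
      also have "r ^ Suc m = X * X * Q ^ Suc m"
      proof -
        have "(2*m+1) * Suc m = Suc m * m + Suc m * m + Suc m" by (simp add: algebra_simps)
        thus ?thesis unfolding r_def X_def by (metis power_add power_mult)
      qed
      finally have Peq: "P = X * X * Q ^ Suc m * (\<Prod>N<Suc m. 1 - q ^ (2*m+1-2*N))" .
      have "(\<Sum>N<Suc m. q ^ (2*m+1-2*N)) \<le> (\<Sum>N<Suc m. q ^ (Suc m - Suc N))"
        using q by (intro sum_mono power_decreasing) auto
      also have "\<dots> = (\<Sum>i<Suc m. q ^ i)" by (rule sum.nat_diff_reindex)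
      also have "\<dots> \<le> 1 / (1 - q)" using geom_partial_le[of q "Suc m"] q by (simp del: sum.lessThan_Suc)
      finally have sb: "(\<Sum>N<Suc m. q ^ (2*m+1-2*N)) \<le> 1 / (1 - q)" .
      have "em \<le> exp (- (\<Sum>N<Suc m. q ^ (2*m+1-2*N)) / (1 - q))"
        unfolding em_def
      proof (subst exp_le_cancel_iff)
        have "(\<Sum>N<Suc m. q ^ (2*m+1-2*N)) / (1 - q) \<le> (1 / (1 - q)) / (1 - q)"
          using sb q by (intro divide_right_mono) auto
        moreover have "- 1 / (1 - q)\<^sup>2 = - ((1 / (1 - q)) / (1 - q))" by (simp add: power2_eq_square)
        moreover have "- (\<Sum>N<Suc m. q ^ (2*m+1-2*N)) / (1 - q) = - ((\<Sum>N<Suc m. q ^ (2*m+1-2*N)) / (1 - q))"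
          by (simp only: minus_divide_left)
        ultimately show "- 1 / (1 - q)\<^sup>2 \<le> - (\<Sum>N<Suc m. q ^ (2*m+1-2*N)) / (1 - q)"
          by linarith
      qed
      also have "\<dots> \<le> (\<Prod>N<Suc m. 1 - q ^ (2*m+1-2*N))"
      proof (rule prod_one_minus_ge_exp)
        fix N assume "N \<in> {..<Suc m}"
        thus "0 \<le> q ^ (2*m+1-2*N)" "q ^ (2*m+1-2*N) \<le> q" using q
          by (auto intro: power_le_one power_decreasing[of 1 _ q, simplified])
      qed (use q in auto)
      finally have "em \<le> (\<Prod>N<Suc m. 1 - q ^ (2*m+1-2*N))" .
      hence "X * X * Q ^ Suc m * em \<le> X * X * Q ^ Suc m * (\<Prod>N<Suc m. 1 - q ^ (2*m+1-2*N))"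
        using X0 Q0 by (intro mult_left_mono) auto
      thus ?thesis using Peq by simp
    qed
    have e_bound: "S \<le> 2 / (1 - q) * X"
    proof -
      have key: "q ^ (j*j) * r ^ j = X * q ^ (e*(e+1))" if eq: "j*j + Suc m * m = (2*m+1)*j + e*(e+1)" for j e
      proof -
        have "q ^ (j*j) * q ^ (Suc m * m) = q ^ ((2*m+1)*j) * q ^ (e*(e+1))"
          by (metis eq power_add)
        hence "(q ^ (j*j) * q ^ (Suc m * m)) * (Q ^ ((2*m+1)*j) * X) = (q ^ ((2*m+1)*j) * q ^ (e*(e+1))) * (Q ^ ((2*m+1)*j) * X)"
          by simp
        moreover have "r ^ j = Q ^ ((2*m+1)*j)" unfolding r_def by (rule power_mult[symmetric])
        moreover have "(q ^ (j*j) * q ^ (Suc m * m)) * (Q ^ ((2*m+1)*j) * X) = q ^ (j*j) * Q ^ ((2*m+1)*j) * (Q ^ (Suc m * m) * q ^ (Suc m * m))"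
          unfolding X_def by (simp only: mult_ac)
        moreover have "(q ^ ((2*m+1)*j) * q ^ (e*(e+1))) * (Q ^ ((2*m+1)*j) * X) = X * q ^ (e*(e+1)) * (Q ^ ((2*m+1)*j) * q ^ ((2*m+1)*j))"
          by (simp only: mult_ac)
        ultimately show ?thesis by (simp only: Qq mult_1_right)
      qed
      define h where "h j = (if Suc m \<le> j then q ^ (j - Suc m) else q ^ (m - j))" for j
      have th: "q ^ (j*j) * r ^ j \<le> X * h j" for j
      proof (cases "Suc m \<le> j")
        case True
        then obtain e where j: "j = Suc m + e" using le_Suc_ex by blast
        have "j*j + Suc m * m = (2*m+1)*j + e*(e+1)" unfolding j by (simp add: algebra_simps)
        hence "q ^ (j*j) * r ^ j = X * q ^ (e*(e+1))" by (rule key)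
        also have "\<dots> \<le> X * q ^ e" using q X0 by (intro mult_left_mono power_decreasing) auto
        finally show ?thesis using True by (simp add: h_def j)
      next
        case False
        then obtain e where j: "m = j + e" by (metis le_Suc_ex not_less_eq_eq le_add_diff_inverse nat_le_linear)
        have "j*j + Suc m * m = (2*m+1)*j + e*(e+1)" unfolding j by (simp add: algebra_simps)
        hence "q ^ (j*j) * r ^ j = X * q ^ (e*(e+1))" by (rule key)
        also have "\<dots> \<le> X * q ^ e" using q X0 by (intro mult_left_mono power_decreasing) auto
        finally show ?thesis using False by (simp add: h_def j)
      qed
      have h0: "0 \<le> h j" for j using q by (simp add: h_def)
      have hs: "(\<Sum>j<M. h j) \<le> 2 / (1 - q)" for M
      proof -
        have "(\<Sum>j<M. h j) \<le> (\<Sum>j<M + Suc m. h j)"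
          by (intro sum_mono2 h0) auto
        also have "\<dots> = (\<Sum>j\<in>{0..<Suc m}. h j) + (\<Sum>j\<in>{Suc m..<M + Suc m}. h j)"
          unfolding lessThan_atLeast0 by (rule sum.atLeastLessThan_concat[symmetric]) auto
        also have "(\<Sum>j\<in>{0..<Suc m}. h j) = (\<Sum>j<Suc m. q ^ (Suc m - Suc j))"
          by (intro sum.cong) (auto simp: h_def)
        also have "\<dots> = (\<Sum>j<Suc m. q ^ j)" by (rule sum.nat_diff_reindex)
        also have "(\<Sum>j\<in>{Suc m..<M + Suc m}. h j) = (\<Sum>j\<in>{0 + Suc m..<M + Suc m}. q ^ (j - Suc m))"
          by (intro sum.cong) (auto simp: h_def)
        also have "\<dots> = (\<Sum>j\<in>{0..<M}. q ^ j)" by (subst sum.shift_bounds_nat_ivl) simp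
        also have "\<dots> = (\<Sum>j<M. q ^ j)" by (simp add: lessThan_atLeast0)
        finally show ?thesis using geom_partial_le[of q "Suc m"] geom_partial_le[of q M] q by simp
      qed
      have "S \<le> X * (2 / (1 - q))" unfolding S_def
      proof (rule suminf_le_const)
        show "summable (\<lambda>j. q ^ (j*j) * r ^ j)" using q r1 by (intro summable_qsq) auto
        fix M
        have "(\<Sum>j<M. q ^ (j*j) * r ^ j) \<le> (\<Sum>j<M. X * h j)" by (intro sum_mono th)
        also have "\<dots> = X * (\<Sum>j<M. h j)" by (simp add: sum_distrib_left)
        also have "\<dots> \<le> X * (2 / (1 - q))" using hs X0 by (intro mult_left_mono) auto
        finally show "(\<Sum>j<M. q ^ (j*j) * r ^ j) \<le> X * (2 / (1 - q))" .
      qed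
      thus ?thesis by (simp add: mult.commute)
    qed
    have CE0: "0 \<le> C * E" using C0 E0 by simp
    have S0: "0 \<le> S" unfolding S_def using q r1 by (intro suminf_nonneg summable_qsq) auto
    have "norm (K z) \<le> (X * ea) * (C * E * S / P)"
    proof -
      have "0 \<le> X * ea" using X0 by (simp add: ea_def)
      moreover have "0 \<le> norm (g (Suc m) z)" by simp
      moreover have "norm (\<Prod>N<Suc m. z - v N) \<le> X * ea" using Pz c_bound by linarith
      ultimately show ?thesis unfolding Kz_eq using gb by (intro mult_mono) auto
    qed
    hence "norm (K z) * P \<le> X * ea * (C * E * S)" using P0 by (simp add: field_simps)
    also have "\<dots> \<le> X * ea * (C * E * (2 / (1 - q) * X))"
      using e_bound CE0 X0 by (intro mult_left_mono) (auto simp: ea_def)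
    also have "\<dots> = (X * X) * D" by (simp add: D_def algebra_simps)
    finally have A: "norm (K z) * P \<le> (X * X) * D" .
    have "norm (K z) * (X * X * Q ^ Suc m * em) \<le> norm (K z) * P"
      using d_bound by (intro mult_left_mono) auto
    with A have "(X * X) * (norm (K z) * (Q ^ Suc m * em)) \<le> (X * X) * D" by (simp add: algebra_simps)
    thus ?thesis using X0 by simp
  qed

  show ?thesis
  proof (rule ccontr)
    assume "(\<Sum>j. c j * (\<Prod>i<j. z - t i)) \<noteq> 0"
    hence Kz: "norm (K z) > 0" by (simp add: K_def)
    have em0: "em > 0" by (simp add: em_def)
    obtain m where m: "a + D / (norm (K z) * em) < Q ^ m" using real_arch_pow[OF Q1] by blast
    have D0: "0 \<le> D" unfolding D_def ea_def using C0 E0 q by auto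
    have "Q ^ m \<le> Q ^ (2*m+1)" using Q1 by (intro power_increasing) auto
    hence "a < Q ^ (2*m+1)" using m D0 Kz em0 by (smt (verit) divide_nonneg_pos mult_pos_pos)
    from est[OF this] have "norm (K z) * em * Q ^ Suc m \<le> D" by (simp add: algebra_simps)
    moreover have "Q ^ m \<le> Q ^ Suc m" using Q1 by (intro power_increasing) auto
    hence "D / (norm (K z) * em) < Q ^ Suc m" using m Kz em0 a_def by (smt (verit) norm_ge_zero)
    hence "D < norm (K z) * em * Q ^ Suc m" using Kz em0 by (simp add: field_simps)
    ultimately show False by simp
  qed
qed



definition Pw :: "real \<Rightarrow> real \<Rightarrow> real" where "Pw q y = (\<Prod>j. 1 + y^2 * q^(2*j))"
definition Wt :: "real \<Rightarrow> real \<Rightarrow> real" where "Wt q y = 1 / Pw q y"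

lemma Pw_has_prod:
  assumes "0 < q" "q < 1"
  shows "(\<lambda>j. 1 + y^2 * q^(2*j)) has_prod Pw q y"
proof -
  have "summable (\<lambda>j. y^2 * (q^2)^j)"
    using assms by (intro summable_mult summable_geometric) (auto simp: abs_less_iff power_less_one_iff)
  hence "summable (\<lambda>j. \<bar>y^2 * q^(2*j)\<bar>)" by (simp add: power_mult abs_mult)
  hence "convergent_prod (\<lambda>j. 1 + y^2 * q^(2*j))"
    by (rule summable_imp_convergent_prod_real) (smt (verit) assms(1) zero_le_power zero_le_power2 mult_nonneg_nonneg)
  thus ?thesis unfolding Pw_def by (rule convergent_prod_has_prod)
qed

lemma Pw_ge_partial:
  assumes "0 < q" "q < 1"
  shows "(\<Prod>j<J. 1 + y^2 * q^(2*j)) \<le> Pw q y"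
proof -
  have "prod (\<lambda>j. 1 + y^2 * q^(2*j)) {..<J} \<le> prodinf (\<lambda>j. 1 + y^2 * q^(2*j))"
    by (rule prod_le_prodinf[OF Pw_has_prod[OF assms]]) (use assms in auto)
  thus ?thesis by (simp add: Pw_def)
qed

lemma Pw_ge1: "0 < q \<Longrightarrow> q < 1 \<Longrightarrow> 1 \<le> Pw q y"
  using Pw_ge_partial[of q y 0] by simp

lemma Wt_pos: "0 < q \<Longrightarrow> q < 1 \<Longrightarrow> 0 < Wt q y"
  using Pw_ge1[of q y] by (simp add: Wt_def)

lemma Wt_le1: "0 < q \<Longrightarrow> q < 1 \<Longrightarrow> Wt q y \<le> 1"
  using Pw_ge1[of q y] by (simp add: Wt_def)

lemma Wt_neg: "Wt q (- y) = Wt q y"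
  by (simp add: Wt_def Pw_def)

lemma Pw_rec:
  assumes "0 < q" "q < 1"
  shows "Pw q y = (1 + y^2) * Pw q (q * y)"
proof -
  define f where "f j = 1 + y^2 * q^(2*j)" for j
  have cp: "convergent_prod f" using Pw_has_prod[OF assms] unfolding f_def
    by (auto simp: has_prod_iff)
  have f00: "f 0 = 1 + y^2" unfolding f_def by simp
  have f0: "f 0 \<noteq> 0" unfolding f00 using zero_le_power2[of y] by linarith
  have "(\<Prod>n. f (Suc n)) = prodinf f / f 0" by (rule prodinf_split_head[OF cp f0])
  moreover have EQ: "(\<lambda>n. f (Suc n)) = (\<lambda>j. 1 + (q*y)^2 * q^(2*j))"
  proof (rule ext)
    fix j
    have "q ^ (2 * Suc j) = q^2 * q^(2*j)" by (metis mult_Suc_right power_add)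
    thus "f (Suc j) = 1 + (q*y)^2 * q^(2*j)" unfolding f_def by (simp add: power_mult_distrib mult_ac)
  qed
  moreover have "Pw q (q*y) = (\<Prod>n. f (Suc n))" unfolding Pw_def EQ ..
  moreover have "prodinf f = Pw q y" unfolding Pw_def f_def ..
  ultimately have "Pw q (q*y) = Pw q y / f 0" by simp
  moreover have "f 0 = 1 + y^2" unfolding f_def by simp
  ultimately show ?thesis using f0 by (simp add: field_simps)
qed

lemma Wt_rec:
  assumes "0 < q" "q < 1"
  shows "Wt q (q * y) = (1 + y^2) * Wt q y"
proof -
  have P: "Pw q y = (1+y^2) * Pw q (q*y)" by (rule Pw_rec[OF assms])
  have a: "0 < 1 + y^2" using zero_le_power2[of y] by linarith
  have b: "0 < Pw q (q*y)" using Pw_ge1[OF assms, of "q*y"] by linarith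
  show ?thesis unfolding Wt_def P using a b by simp
qed

lemma Pw_big:
  assumes "0 < q" "q < 1"
  shows "y^(2*Suc m) * q^(Suc m * m) \<le> Pw q y"
proof -
  have "(\<Prod>j<Suc m. y^2 * q^(2*j)) = (y^2)^(Suc m) * q^(\<Sum>j<Suc m. 2*j)"
    by (simp only: prod.distrib prod_constant card_lessThan flip: power_sum)
  also have "\<dots> = y^(2*Suc m) * q^(Suc m * m)" by (simp only: sum_double_lessThan power_mult)
  finally have "y^(2*Suc m) * q^(Suc m * m) = (\<Prod>j<Suc m. y^2 * q^(2*j))" by simp
  also have "\<dots> \<le> (\<Prod>j<Suc m. 1 + y^2 * q^(2*j))"
    using assms by (intro prod_mono) auto
  also have "\<dots> \<le> Pw q y" by (rule Pw_ge_partial[OF assms])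
  finally show ?thesis .
qed

lemma qpoch_real:
  assumes "0 < q" "q < 1"
  shows "qpoch_inf (- ((complex_of_real y)^2)) (q^2) = complex_of_real (Pw q y)"
proof -
  have A: "(\<lambda>j. complex_of_real (1 + y^2 * q^(2*j))) has_prod complex_of_real (Pw q y)"
    by (rule has_prod_of_real_iff[THEN iffD2, OF Pw_has_prod[OF assms]])
  have B: "(\<lambda>j. complex_of_real (1 + y^2 * q^(2*j))) = (\<lambda>j. 1 - (- ((complex_of_real y)^2)) * complex_of_real ((q^2)^j))"
    by (rule ext) (simp add: power_mult)
  have "(\<lambda>j. 1 - (- ((complex_of_real y)^2)) * complex_of_real ((q^2)^j)) has_prod complex_of_real (Pw q y)"
    using A unfolding B .
  thus ?thesis unfolding qpoch_inf_def by (rule has_prod_unique[symmetric])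
qed

lemma eq_real:
  assumes "0 < q" "q < 1"
  shows "e_q (q^2) (- ((complex_of_real y)^2)) = complex_of_real (Wt q y)"
  unfolding e_q_def qpoch_real[OF assms] Wt_def by simp



lemma int_summable:
  fixes f :: "int \<Rightarrow> real" and A B q :: real
  assumes q: "0 \<le> q" "q < 1" and f0: "\<And>k. 0 \<le> f k"
    and fp: "\<And>p. f (int p) \<le> A * q ^ p" and fn: "\<And>p. f (- int (Suc p)) \<le> B * q ^ p"
  shows "f summable_on UNIV"
proof -
  have U: "(UNIV::int set) = range int \<union> range (\<lambda>p. - int (Suc p))"
  proof -
    have "k \<in> range int \<union> range (\<lambda>p. - int (Suc p))" for k :: int
    proof (cases "k \<ge> 0")
      case True then have "k = int (nat k)" by simp
      thus ?thesis by blast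
    next
      case False then have "k = - int (Suc (nat (-k-1)))" by simp
      thus ?thesis by blast
    qed
    thus ?thesis by blast
  qed
  have s1: "f summable_on range int"
  proof -
    have "summable (\<lambda>p. A * q^p)" using q by (intro summable_mult summable_geometric) auto
    hence "summable (f \<circ> int)"
      by (rule summable_comparison_test'[where N = 0]) (use f0 fp in auto)
    hence "(f \<circ> int) summable_on UNIV" by (rule summable_nonneg_imp_summable_on) (use f0 in auto)
    thus ?thesis using summable_on_reindex[of int UNIV f] by (auto simp: inj_on_def)
  qed
  have s2: "f summable_on range (\<lambda>p. - int (Suc p))"
  proof -
    have "summable (\<lambda>p. B * q^p)" using q by (intro summable_mult summable_geometric) auto
    hence "summable (f \<circ> (\<lambda>p. - int (Suc p)))"
      by (rule summable_comparison_test'[where N = 0]) (use f0 fn in auto)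
    hence "(f \<circ> (\<lambda>p. - int (Suc p))) summable_on UNIV" by (rule summable_nonneg_imp_summable_on) (use f0 in auto)
    thus ?thesis using summable_on_reindex[of "\<lambda>p. - int (Suc p)" UNIV f] by (auto simp: inj_on_def)
  qed
  have "f summable_on (range int \<union> range (\<lambda>p. - int (Suc p)))"
    by (rule summable_on_Un_disjoint[OF s1 s2]) auto
  thus ?thesis using U by simp
qed

definition xk :: "real \<Rightarrow> real \<Rightarrow> int \<Rightarrow> real" where "xk q \<gamma> k = q powi k * \<gamma>"
definition mom :: "real \<Rightarrow> real \<Rightarrow> nat \<Rightarrow> real" where
  "mom q \<gamma> m = infsum (\<lambda>k. xk q \<gamma> k ^ (m+1) * Wt q (xk q \<gamma> k)) UNIV"

lemma xk_pos: "0 < q \<Longrightarrow> 0 < \<gamma> \<Longrightarrow> 0 < xk q \<gamma> k"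
  by (simp add: xk_def)

lemma xk_succ: "0 < q \<Longrightarrow> xk q \<gamma> (k+1) = q * xk q \<gamma> k"
  by (simp add: xk_def power_int_add)

lemma xk_nat: "xk q \<gamma> (int p) = q^p * \<gamma>"
  by (simp add: xk_def)

lemma xk_neg: "xk q \<gamma> (- int (Suc p)) = \<gamma> / q ^ Suc p"
  by (simp only: xk_def power_int_minus_divide power_int_of_nat) (simp add: field_simps)

lemma mom_summable:
  assumes q: "0 < q" "q < 1" and g: "0 < \<gamma>"
  shows "(\<lambda>k. xk q \<gamma> k ^ (m+1) * Wt q (xk q \<gamma> k)) summable_on UNIV"
proof (rule int_summable[where A = "\<gamma>^(m+1)" and B = "1 / (\<gamma>^(m+3) * q^(Suc (Suc m) * Suc m))" and q = q])
  show "0 \<le> q" "q < 1" using q by auto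
  show "0 \<le> xk q \<gamma> k ^ (m+1) * Wt q (xk q \<gamma> k)" for k
    using xk_pos[OF q(1) g] Wt_pos[OF q] by (intro mult_nonneg_nonneg) (auto intro: less_imp_le)
  show "xk q \<gamma> (int p) ^ (m+1) * Wt q (xk q \<gamma> (int p)) \<le> \<gamma>^(m+1) * q^p" for p
  proof -
    have "xk q \<gamma> (int p) ^ (m+1) * Wt q (xk q \<gamma> (int p)) \<le> xk q \<gamma> (int p) ^ (m+1) * 1"
      using xk_pos[OF q(1) g] Wt_le1[OF q] by (intro mult_left_mono) (auto intro: less_imp_le)
    also have "\<dots> = \<gamma>^(m+1) * (q^p * (q^p)^m)" by (simp add: xk_nat power_mult_distrib mult_ac)
    also have "\<dots> \<le> \<gamma>^(m+1) * (q^p * 1)"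
      using q g by (intro mult_left_mono power_le_one) auto
    finally show ?thesis by simp
  qed
  show "xk q \<gamma> (- int (Suc p)) ^ (m+1) * Wt q (xk q \<gamma> (- int (Suc p))) \<le> 1 / (\<gamma>^(m+3) * q^(Suc (Suc m) * Suc m)) * q^p" for p
  proof -
    define y where "y = xk q \<gamma> (- int (Suc p))"
    define D where "D = q^(Suc (Suc m) * Suc m)"
    have y0: "0 < y" unfolding y_def by (rule xk_pos[OF q(1) g])
    have D0: "0 < D" using q by (simp add: D_def)
    have P: "y^(2*Suc (Suc m)) * D \<le> Pw q y" unfolding D_def by (rule Pw_big[OF q])
    have "y ^ (m+1) * Wt q y = y^(m+1) / Pw q y" by (simp add: Wt_def)
    also have "\<dots> \<le> y^(m+1) / (y^(2*Suc (Suc m)) * D)"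
    proof -
      have a: "0 < y^(2*Suc (Suc m)) * D" using y0 D0 by simp
      have b: "0 < Pw q y" using Pw_ge1[OF q, of y] by linarith
      show ?thesis using P a b y0 by (intro divide_left_mono) auto
    qed
    also have "\<dots> = 1 / (y^(m+3) * D)"
    proof -
      have "2*Suc (Suc m) = (m+1) + (m+3)" by simp
      hence "y^(2*Suc (Suc m)) = y^(m+1) * y^(m+3)" by (metis power_add)
      thus ?thesis using y0 by simp
    qed
    also have "y^(m+3) = \<gamma>^(m+3) / q^(Suc p * (m+3))"
      unfolding y_def xk_neg by (simp only: power_divide power_mult)
    also have "1 / (\<gamma>^(m+3) / q^(Suc p * (m+3)) * D) = q^(Suc p * (m+3)) / (\<gamma>^(m+3) * D)"
      using q g by (simp add: field_simps)
    also have "\<dots> \<le> q^p / (\<gamma>^(m+3) * D)"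
    proof -
      have "p * 1 \<le> p * (m+3)" by (intro mult_le_mono2) simp
      hence "p \<le> (m+3) + p * (m+3)" by linarith
      moreover have "Suc p * (m+3) = (m+3) + p * (m+3)" by simp
      ultimately have "p \<le> Suc p * (m+3)" by (simp only:)
      thus ?thesis using q g D0 by (intro divide_right_mono power_decreasing) auto
    qed
    finally show ?thesis by (simp add: y_def D_def)
  qed
qed

lemma mom_rec:
  assumes q: "0 < q" "q < 1" and g: "0 < \<gamma>"
  shows "mom q \<gamma> m = q^(m+1) * (mom q \<gamma> m + mom q \<gamma> (m+2))"
proof -
  define g where "g = (\<lambda>n k. xk q \<gamma> k ^ (n+1) * Wt q (xk q \<gamma> k))"
  have r: "range (\<lambda>k::int. k+1) = UNIV" by (metis surj_def diff_add_cancel)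
  have "mom q \<gamma> m = infsum (g m) (range (\<lambda>k::int. k+1))" unfolding r mom_def g_def ..
  also have "\<dots> = infsum (g m \<circ> (\<lambda>k. k+1)) UNIV" by (rule infsum_reindex) (auto simp: inj_on_def)
  also have "(g m \<circ> (\<lambda>k. k+1)) = (\<lambda>k. q^(m+1) * (g m k + g (m+2) k))"
  proof (rule ext)
    fix k
    have "(g m \<circ> (\<lambda>k. k+1)) k = (q * xk q \<gamma> k) ^ (m+1) * ((1 + (xk q \<gamma> k)^2) * Wt q (xk q \<gamma> k))"
      by (simp add: g_def xk_succ[OF q(1)] Wt_rec[OF q])
    also have "\<dots> = q^(m+1) * (g m k + g (m+2) k)"
      by (simp add: g_def power_mult_distrib algebra_simps power_add[symmetric])
    finally show "(g m \<circ> (\<lambda>k. k+1)) k = q^(m+1) * (g m k + g (m+2) k)" .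
  qed
  also have "infsum (\<lambda>k. q^(m+1) * (g m k + g (m+2) k)) UNIV = q^(m+1) * (infsum (g m) UNIV + infsum (g (m+2)) UNIV)"
    using mom_summable[OF q g, of m] mom_summable[OF q g, of "m+2"]
    by (simp add: infsum_cmult_right' infsum_add g_def)
  finally show ?thesis unfolding mom_def g_def .
qed

lemma mom_pos:
  assumes q: "0 < q" "q < 1" and g: "0 < \<gamma>"
  shows "0 < mom q \<gamma> m"
proof -
  define f where "f = (\<lambda>k. xk q \<gamma> k ^ (m+1) * Wt q (xk q \<gamma> k))"
  have f0: "0 < f k" for k unfolding f_def using xk_pos[OF q(1) g] Wt_pos[OF q] by simp
  have fs: "f summable_on UNIV" unfolding f_def by (rule mom_summable[OF q g])
  have "infsum f {0} \<le> infsum f UNIV"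
    by (rule infsum_mono_neutral) (use f0 fs in \<open>auto intro: less_imp_le\<close>)
  moreover have "infsum f {0} = f 0" by simp
  moreover have "mom q \<gamma> m = infsum f UNIV" unfolding mom_def f_def ..
  ultimately show ?thesis using f0[of 0] by simp
qed

lemma mom_step:
  assumes q: "0 < q" "q < 1" and g: "0 < \<gamma>"
  shows "mom q \<gamma> (n+2) = mom q \<gamma> n * ((1/q)^(n+1) - 1)"
proof -
  have "mom q \<gamma> n = q^(n+1) * (mom q \<gamma> n + mom q \<gamma> (n+2))" by (rule mom_rec[OF q g])
  hence "mom q \<gamma> n * (1/q)^(n+1) = mom q \<gamma> n + mom q \<gamma> (n+2)"
    using q by (simp add: power_one_over field_simps)
  thus ?thesis by (simp add: algebra_simps)
qed

lemma mom_prod: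
  assumes q: "0 < q" "q < 1" and g: "0 < \<gamma>"
  shows "mom q \<gamma> (n + 2*j) = mom q \<gamma> n * (\<Prod>i<j. (1/q)^(n+1+2*i) - 1)"
proof (induction j)
  case 0 show ?case by simp
next
  case (Suc j)
  have "mom q \<gamma> (n + 2 * Suc j) = mom q \<gamma> ((n + 2*j) + 2)" by simp
  also have "\<dots> = mom q \<gamma> (n + 2*j) * ((1/q)^(n+2*j+1) - 1)" by (rule mom_step[OF q g])
  also have "\<dots> = mom q \<gamma> n * (\<Prod>i<Suc j. (1/q)^(n+1+2*i) - 1)"
    using Suc by (simp add: algebra_simps)
  finally show ?case .
qed

lemma mom_bound:
  assumes q: "0 < q" "q < 1" and g: "0 < \<gamma>"
  shows "mom q \<gamma> m \<le> max (mom q \<gamma> 0) (mom q \<gamma> 1) * (1/q) powr (real m ^ 2 / 4)"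
proof (induction m rule: less_induct)
  case (less m)
  define B where "B = max (mom q \<gamma> 0) (mom q \<gamma> 1)"
  have Q1: "1 < 1/q" using q by simp
  have B0: "0 \<le> B" using mom_pos[OF q g, of 0] by (simp add: B_def)
  show ?case
  proof (cases m)
    case 0 thus ?thesis using q by (simp add: B_def[symmetric])
  next
    case (Suc m')
    show ?thesis
    proof (cases m')
      case 0
      have "1 \<le> (1/q) powr (1/4)" using Q1 by (intro ge_one_powr_ge_zero) auto
      hence "B * 1 \<le> B * (1/q) powr (1/4)" using B0 by (intro mult_left_mono) auto
      moreover have "mom q \<gamma> 1 \<le> B" by (simp add: B_def)
      ultimately have "mom q \<gamma> m \<le> B * (1/q) powr (real m ^ 2 / 4)" using Suc 0 by simp
      thus ?thesis unfolding B_def .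
    next
      case (Suc k)
      have m: "m = k + 2" using \<open>m = Suc m'\<close> Suc by simp
      have IH: "mom q \<gamma> k \<le> B * (1/q) powr (real k ^ 2 / 4)" using less m B_def by simp
      have "mom q \<gamma> m = mom q \<gamma> k * ((1/q)^(k+1) - 1)" unfolding m by (rule mom_step[OF q g])
      also have "\<dots> \<le> mom q \<gamma> k * (1/q)^(k+1)"
        using mom_pos[OF q g, of k] by (intro mult_left_mono) auto
      also have "\<dots> \<le> B * (1/q) powr (real k ^ 2 / 4) * (1/q)^(k+1)"
        using IH q by (intro mult_right_mono) auto
      also have "(1/q)^(k+1) = (1/q) powr (real (k+1))" using q by (subst powr_realpow) auto
      also have "B * (1/q) powr (real k ^ 2 / 4) * (1/q) powr (real (k+1)) = B * (1/q) powr (real m ^ 2 / 4)"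
      proof -
        have "real k ^ 2 / 4 + real (k+1) = real m ^ 2 / 4" unfolding m by (simp add: power2_eq_square field_simps)
        hence "(1/q) powr (real k ^ 2 / 4) * (1/q) powr (real (k+1)) = (1/q) powr (real m ^ 2 / 4)"
          by (simp only: powr_add[symmetric])
        thus ?thesis by (simp only: mult.assoc)
      qed
      finally show ?thesis by (simp add: B_def)
    qed
  qed
qed



lemma has_sum_pm:
  fixes f :: "int \<times> real \<Rightarrow> 'a::topological_comm_monoid_add"
  assumes "((\<lambda>k. f (k, 1)) has_sum A) UNIV" "((\<lambda>k. f (k, -1)) has_sum B) UNIV"
  shows "(f has_sum (A + B)) (UNIV \<times> {-1, 1})"
proof -
  have i1: "inj_on (\<lambda>k::int. (k, 1::real)) UNIV" by (auto simp: inj_on_def)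
  have i2: "inj_on (\<lambda>k::int. (k, -1::real)) UNIV" by (auto simp: inj_on_def)
  have h1: "(f has_sum A) ((\<lambda>k::int. (k, 1::real)) ` UNIV)"
    using has_sum_reindex[OF i1, of f A] assms(1) by (simp add: o_def)
  have h2: "(f has_sum B) ((\<lambda>k::int. (k, -1::real)) ` UNIV)"
    using has_sum_reindex[OF i2, of f B] assms(2) by (simp add: o_def)
  have "(f has_sum (A + B)) ((\<lambda>k::int. (k, 1::real)) ` UNIV \<union> (\<lambda>k::int. (k, -1::real)) ` UNIV)"
    by (rule has_sum_Un_disjoint[OF h1 h2]) auto
  moreover have "(\<lambda>k::int. (k, 1::real)) ` UNIV \<union> (\<lambda>k::int. (k, -1::real)) ` UNIV = UNIV \<times> {-1, 1}"
    by auto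
  ultimately show ?thesis by simp
qed

lemma outer_summable:
  fixes q s \<gamma> C :: real and a :: "nat \<Rightarrow> complex" and n :: nat
  assumes q: "0 < q" "q < 1" and s: "0 < s" "s < 1" and g: "0 < \<gamma>"
    and ab: "\<And>l. norm (a l) \<le> C * s^l * q powr (real l ^ 2 / 2)"
  shows "(\<lambda>l. norm (a l) * (2 * (1 - q) * mom q \<gamma> (l+n))) summable_on UNIV"
proof (rule summable_nonneg_imp_summable_on)
  define B where "B = max (mom q \<gamma> 0) (mom q \<gamma> 1)"
  have B0: "0 \<le> B" using mom_pos[OF q g, of 0] by (simp add: B_def)
  have C0: "0 \<le> C" using ab[of 0] norm_ge_zero[of "a 0"] q by (simp del: norm_ge_zero)
  define K where "K = C * (2 * (1 - q)) * B * (1/q) powr (real n ^ 2 / 4)"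
  show "summable (\<lambda>l. norm (a l) * (2 * (1 - q) * mom q \<gamma> (l+n)))"
  proof (rule summable_comparison_test'[where N = "2*n"])
    show "summable (\<lambda>l. K * s^l)" using s by (intro summable_mult summable_geometric) auto
    fix l assume l: "2*n \<le> l"
    have m0: "0 \<le> mom q \<gamma> (l+n)" using mom_pos[OF q g] less_imp_le by blast
    have key: "q powr (real l ^ 2 / 2) * (1/q) powr (real (l+n) ^ 2 / 4) \<le> (1/q) powr (real n ^ 2 / 4)"
    proof -
      have e: "(1/q) powr t = q powr (- t)" for t using q by (simp add: powr_divide powr_minus_divide)
      have "q powr (real l ^ 2 / 2) * (1/q) powr (real (l+n) ^ 2 / 4) = q powr (real l ^ 2 / 2 - real (l+n) ^ 2 / 4)"
        unfolding e by (simp add: powr_add[symmetric])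
      also have "\<dots> \<le> q powr (- (real n ^ 2 / 4))"
      proof (rule powr_mono')
        have "0 \<le> real l * (real l - 2 * real n)" using l by (intro mult_nonneg_nonneg) auto
        thus "- (real n ^ 2 / 4) \<le> real l ^ 2 / 2 - real (l+n) ^ 2 / 4"
          by (simp add: power2_eq_square algebra_simps)
      qed (use q in auto)
      also have "\<dots> = (1/q) powr (real n ^ 2 / 4)" by (simp add: e)
      finally show ?thesis .
    qed
    have "norm (norm (a l) * (2 * (1 - q) * mom q \<gamma> (l+n))) = norm (a l) * (2 * (1 - q) * mom q \<gamma> (l+n))"
      using m0 q by simp
    also have "\<dots> \<le> (C * s^l * q powr (real l ^ 2 / 2)) * (2 * (1 - q) * (B * (1/q) powr (real (l+n) ^ 2 / 4)))"
      using ab[of l] mom_bound[OF q g, of "l+n"] m0 q B0 C0 s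
      by (intro mult_mono mult_left_mono) (auto simp: B_def)
    also have "\<dots> = C * (2 * (1 - q)) * B * s^l * (q powr (real l ^ 2 / 2) * (1/q) powr (real (l+n) ^ 2 / 4))"
      by (simp add: algebra_simps)
    also have "\<dots> \<le> C * (2 * (1 - q)) * B * s^l * (1/q) powr (real n ^ 2 / 4)"
      using key C0 B0 q s by (intro mult_left_mono) auto
    also have "\<dots> = K * s^l" by (simp add: K_def algebra_simps)
    finally show "norm (norm (a l) * (2 * (1 - q) * mom q \<gamma> (l+n))) \<le> K * s^l" .
  qed
  show "0 \<le> norm (a l) * (2 * (1 - q) * mom q \<gamma> (l+n))" for l
    using mom_pos[OF q g, of "l+n"] q by simp
qed



lemma moment_identity:
  fixes q s \<gamma> C :: real and a :: "nat \<Rightarrow> complex" and F :: "complex \<Rightarrow> complex" and n :: nat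
  assumes q: "0 < q" "q < 1" and s: "0 < s" "s < 1" and g: "0 < \<gamma>"
    and ab: "\<And>l. norm (a l) \<le> C * s^l * q powr (real l ^ 2 / 2)"
    and Fr: "\<And>y. F (complex_of_real y) = (\<Sum>l. a l * complex_of_real y ^ l) * complex_of_real (Wt q y)"
    and H: "qint_has q \<gamma> (\<lambda>x. F x * x ^ n) 0"
  shows "(\<lambda>l. a l * complex_of_real ((1 - q) * (1 + (-1)^(l+n)) * mom q \<gamma> (l+n))) sums 0"
proof -
  define I where "I = (UNIV::int set) \<times> {-1, 1::real}"
  define h where "h = (\<lambda>m k. xk q \<gamma> k ^ (m+1) * Wt q (xk q \<gamma> k))"
  have hsum: "(h m has_sum mom q \<gamma> m) UNIV" for m
    unfolding h_def mom_def by (rule has_sum_infsum[OF mom_summable[OF q g]])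
  have h0: "0 \<le> h m k" for m k unfolding h_def
    using xk_pos[OF q(1) g, of k] Wt_pos[OF q, of "xk q \<gamma> k"] by simp
  define G where "G = (\<lambda>l (p::int \<times> real). a l * complex_of_real ((1 - q) * (snd p)^(l+n) * h (l+n) (fst p)))"
  define Hf where "Hf = (\<lambda>(k::int, \<epsilon>::real). complex_of_real ((1 - q) * q powi k * \<gamma>) *
      (F (complex_of_real (\<epsilon> * q powi k * \<gamma>)) * complex_of_real (\<epsilon> * q powi k * \<gamma>) ^ n))"
  have Hs: "(Hf has_sum 0) I" using H unfolding qint_has_def Hf_def I_def .
  have Gl: "((\<lambda>p. G l p) has_sum (a l * complex_of_real ((1 - q) * (1 + (-1)^(l+n)) * mom q \<gamma> (l+n)))) I" for l
  proof -
    have A: "((\<lambda>k. G l (k, 1)) has_sum (a l * complex_of_real ((1 - q) * mom q \<gamma> (l+n)))) UNIV"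
    proof -
      have "((\<lambda>k. a l * complex_of_real ((1 - q) * h (l+n) k)) has_sum (a l * complex_of_real ((1 - q) * mom q \<gamma> (l+n)))) UNIV"
        by (intro has_sum_cmult_right has_sum_of_real hsum)
      moreover have "(\<lambda>k. G l (k, 1)) = (\<lambda>k. a l * complex_of_real ((1 - q) * h (l+n) k))"
        by (simp add: G_def)
      ultimately show ?thesis by simp
    qed
    have B: "((\<lambda>k. G l (k, -1)) has_sum (a l * complex_of_real ((1 - q) * (-1)^(l+n) * mom q \<gamma> (l+n)))) UNIV"
    proof -
      have "((\<lambda>k. a l * complex_of_real ((1 - q) * (-1)^(l+n) * h (l+n) k)) has_sum (a l * complex_of_real ((1 - q) * (-1)^(l+n) * mom q \<gamma> (l+n)))) UNIV"
        by (intro has_sum_cmult_right has_sum_of_real hsum)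
      moreover have "(\<lambda>k. G l (k, -1)) = (\<lambda>k. a l * complex_of_real ((1 - q) * (-1)^(l+n) * h (l+n) k))"
        by (simp add: G_def)
      ultimately show ?thesis by simp
    qed
    have "a l * complex_of_real ((1 - q) * mom q \<gamma> (l+n)) + a l * complex_of_real ((1 - q) * (-1)^(l+n) * mom q \<gamma> (l+n))
        = a l * complex_of_real ((1 - q) * (1 + (-1)^(l+n)) * mom q \<gamma> (l+n))"
      by (simp add: algebra_simps)
    with has_sum_pm[OF A B] show ?thesis unfolding I_def by simp
  qed
  have NG: "(\<lambda>x. norm (case_prod G x)) summable_on (UNIV \<times> I)"
  proof -
    have "(\<lambda>x. norm (case_prod G x)) summable_on (Sigma UNIV (\<lambda>_. I))"
    proof (rule summable_on_SigmaI[where g = "\<lambda>l. norm (a l) * (2 * (1 - q) * mom q \<gamma> (l+n))"])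
      fix l :: nat
      have e1: "(\<lambda>k. norm (case_prod G (l, (k, 1)))) = (\<lambda>k. norm (a l) * ((1 - q) * h (l+n) k))"
        using q h0 by (simp add: G_def norm_mult abs_mult del: of_real_mult of_real_diff of_real_power)
      have e2: "(\<lambda>k. norm (case_prod G (l, (k, -1)))) = (\<lambda>k. norm (a l) * ((1 - q) * h (l+n) k))"
        using q h0 by (simp add: G_def norm_mult abs_mult power_abs del: of_real_mult of_real_diff of_real_power)
      have hs: "((\<lambda>k. norm (a l) * ((1 - q) * h (l+n) k)) has_sum (norm (a l) * ((1 - q) * mom q \<gamma> (l+n)))) UNIV"
        by (intro has_sum_cmult_right hsum)
      have "((\<lambda>p. norm (case_prod G (l, p))) has_sum (norm (a l) * ((1 - q) * mom q \<gamma> (l+n)) + norm (a l) * ((1 - q) * mom q \<gamma> (l+n)))) (UNIV \<times> {-1,1})"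
        by (rule has_sum_pm) (use hs e1 e2 in simp_all)
      thus "((\<lambda>p. norm (case_prod G (l, p))) has_sum (norm (a l) * (2 * (1 - q) * mom q \<gamma> (l+n)))) I"
        unfolding I_def by (simp add: algebra_simps)
    next
      show "(\<lambda>l. norm (a l) * (2 * (1 - q) * mom q \<gamma> (l+n))) summable_on UNIV"
        by (rule outer_summable[OF q s g ab])
    qed auto
    thus ?thesis by simp
  qed
  have GS: "(\<lambda>(l, p). G l p) summable_on (UNIV \<times> I)"
    using abs_summable_summable[OF NG] by (simp add: case_prod_beta')
  have Gp: "infsum (\<lambda>l. G l p) UNIV = Hf p" if p: "p \<in> I" for p
  proof -
    obtain k \<epsilon> where pe: "p = (k, \<epsilon>)" by (cases p)
    have eps: "\<epsilon> = -1 \<or> \<epsilon> = 1" using p by (auto simp: I_def pe)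
    define x where "x = xk q \<gamma> k"
    have x0: "0 < x" unfolding x_def by (rule xk_pos[OF q(1) g])
    define z where "z = complex_of_real (\<epsilon> * x)"
    define cp where "cp = complex_of_real ((1 - q) * x * Wt q x) * z ^ n"
    have cp0: "cp \<noteq> 0" unfolding cp_def z_def using q x0 Wt_pos[OF q, of x] eps by auto
    have Gsl: "(\<lambda>l. G l p) summable_on UNIV"
    proof -
      have sw: "(\<lambda>(x, y). G y x) summable_on (I \<times> UNIV)"
        using GS summable_on_swap[of "\<lambda>(l, p). G l p" UNIV I] by simp
      from summable_on_SigmaD1[of "\<lambda>x y. G y x" I "\<lambda>_. UNIV" p, OF sw p] show ?thesis by simp
    qed
    have Geq: "G l p = cp * (a l * z ^ l)" for l
    proof -
      have R: "(1 - q) * \<epsilon>^(l+n) * (x^(l+n+1) * Wt q x) = (1 - q) * x * Wt q x * (\<epsilon> * x)^n * (\<epsilon> * x)^l"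
        by (simp add: power_mult_distrib power_add algebra_simps)
      have "G l p = a l * complex_of_real ((1 - q) * \<epsilon>^(l+n) * (x^(l+n+1) * Wt q x))"
        by (simp only: G_def h_def pe x_def fst_conv snd_conv)
      also have "\<dots> = a l * complex_of_real ((1 - q) * x * Wt q x * (\<epsilon> * x)^n * (\<epsilon> * x)^l)"
        by (simp only: R)
      also have "\<dots> = cp * (a l * z ^ l)"
        unfolding cp_def z_def by (simp only: of_real_mult of_real_power mult_ac)
      finally show ?thesis .
    qed
    have ps: "(\<lambda>l. a l * z ^ l) summable_on UNIV"
    proof -
      have "(\<lambda>l. inverse cp * G l p) summable_on UNIV" by (rule summable_on_cmult_right[OF Gsl])
      moreover have "(\<lambda>l. inverse cp * G l p) = (\<lambda>l. a l * z ^ l)" using cp0 by (auto simp: Geq)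
      ultimately show ?thesis by simp
    qed
    have "infsum (\<lambda>l. a l * z ^ l) UNIV = (\<Sum>l. a l * z ^ l)"
      using has_sum_imp_sums[OF has_sum_infsum[OF ps]] by (simp add: sums_iff)
    hence "infsum (\<lambda>l. G l p) UNIV = cp * (\<Sum>l. a l * z ^ l)"
      by (simp add: Geq infsum_cmult_right')
    also have "\<dots> = Hf p"
    proof -
      have w: "Wt q (\<epsilon> * x) = Wt q x" using eps by (auto simp: Wt_neg)
      have "Hf p = complex_of_real ((1 - q) * x) * (F z * z ^ n)"
        unfolding Hf_def pe z_def x_def xk_def by (simp add: mult.assoc)
      also have "\<dots> = complex_of_real ((1 - q) * x) * ((\<Sum>l. a l * z ^ l) * complex_of_real (Wt q x) * z ^ n)"
        unfolding z_def Fr w ..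
      also have "\<dots> = cp * (\<Sum>l. a l * z ^ l)" unfolding cp_def by (simp add: algebra_simps)
      finally show ?thesis by simp
    qed
    finally show ?thesis .
  qed
  have sw: "infsum (\<lambda>l. infsum (\<lambda>p. G l p) I) UNIV = infsum (\<lambda>p. infsum (\<lambda>l. G l p) UNIV) I"
    by (rule infsum_swap_banach[OF GS])
  have "infsum (\<lambda>p. infsum (\<lambda>l. G l p) UNIV) I = infsum Hf I"
    by (rule infsum_cong) (rule Gp)
  also have "\<dots> = 0" using Hs by (rule infsumI)
  finally have Z: "infsum (\<lambda>l. infsum (\<lambda>p. G l p) I) UNIV = 0" using sw by simp
  have ev: "infsum (\<lambda>p. G l p) I = a l * complex_of_real ((1 - q) * (1 + (-1)^(l+n)) * mom q \<gamma> (l+n))" for l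
    using Gl[of l] by (rule infsumI)
  have summ: "(\<lambda>l. infsum (\<lambda>p. G l p) I) summable_on UNIV"
  proof -
    have "(\<lambda>x. infsum (\<lambda>y. case_prod G (x, y)) I) summable_on UNIV"
      by (rule summable_on_SigmaD[where B = "\<lambda>_. I"]) (use GS Gl in \<open>auto simp: case_prod_beta' summable_on_def\<close>)
    thus ?thesis by simp
  qed
  have "((\<lambda>l. infsum (\<lambda>p. G l p) I) has_sum 0) UNIV"
    using has_sum_infsum[OF summ] Z by simp
  hence "(\<lambda>l. infsum (\<lambda>p. G l p) I) sums 0" by (rule has_sum_imp_sums)
  thus ?thesis unfolding ev .
qed



lemma newton_coeffs_zero:
  fixes q C :: real and c t :: "nat \<Rightarrow> complex"
  assumes q: "0 < q" "q < 1"
    and cb: "\<And>j. norm (c j) \<le> C * q ^ (j*j)"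
    and tb: "\<And>i. norm (t i) \<le> q ^ i"
    and tinj: "\<And>i m. i < m \<Longrightarrow> t i \<noteq> t m"
    and zeros: "\<And>N. (\<Sum>j. c j * (\<Prod>i<j. complex_of_real ((1/q)^(2*N)) - t i)) = 0"
  shows "c m = 0"
proof (induction m rule: less_induct)
  case (less m)
  have "(\<Sum>j. c j * (\<Prod>i<j. t m - t i)) = 0" by (rule newton_series_zero[OF q cb tb zeros])
  moreover have "(\<lambda>j. c j * (\<Prod>i<j. t m - t i)) sums (\<Sum>j<Suc m. c j * (\<Prod>i<j. t m - t i))"
  proof (rule sums_finite)
    fix j assume "j \<notin> {..<Suc m}"
    hence "m < j" by simp
    hence "(\<Prod>i<j. t m - t i) = 0" by (intro prod_zero) (auto intro!: bexI[of _ m])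
    thus "c j * (\<Prod>i<j. t m - t i) = 0" by simp
  qed simp
  moreover have "(\<Sum>j<Suc m. c j * (\<Prod>i<j. t m - t i)) = c m * (\<Prod>i<m. t m - t i)"
    using less by simp
  ultimately have "c m * (\<Prod>i<m. t m - t i) = 0" by (simp add: sums_iff)
  moreover have "(\<Prod>i<m. t m - t i) \<noteq> 0"
  proof -
    have "t m - t i \<noteq> 0" if "i < m" for i using tinj[OF that] by simp
    thus ?thesis by (simp add: prod_zero_iff)
  qed
  ultimately show ?case by simp
qed

lemma sums_cancel:
  fixes K :: complex
  assumes "(\<lambda>j. K * u j) sums 0" "K \<noteq> 0"
  shows "u sums 0"
proof -
  from sums_mult[OF assms(1), of "inverse K"] have "(\<lambda>j. inverse K * (K * u j)) sums 0" by simp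
  moreover have "(\<lambda>j. inverse K * (K * u j)) = u" using assms(2) by (auto simp: fun_eq_iff)
  ultimately show ?thesis by simp
qed

lemma sum_odd_lessThan: "(\<Sum>i<j. 2*i + 2*r + 1) = j*j + 2*r*(j::nat)"
  by (induction j) (auto simp: algebra_simps)

lemma coeff_parity_zero:
  fixes q s \<gamma> C :: real and a :: "nat \<Rightarrow> complex" and r :: nat
  assumes q: "0 < q" "q < 1" and s: "0 < s" "s < 1" and g: "0 < \<gamma>"
    and ab: "\<And>l. norm (a l) \<le> C * s^l * q powr (real l ^ 2 / 2)"
    and MI: "\<And>n. (\<lambda>l. a l * complex_of_real ((1 - q) * (1 + (-1)^(l+n)) * mom q \<gamma> (l+n))) sums 0"
    and r: "r < 2"
  shows "a (2*j + r) = 0"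
proof -
  define Q where "Q = 1/q"
  have Q0: "0 < Q" using q by (simp add: Q_def)
  have Qq: "Q ^ k * q ^ k = 1" for k using q by (simp add: Q_def power_one_over)
  have C0: "0 \<le> C" using ab[of 0] norm_ge_zero[of "a 0"] q by (simp del: norm_ge_zero)
  define c where "c j = a (2*j+r) * complex_of_real (Q ^ (j*j + 2*r*j))" for j
  define t where "t i = complex_of_real (q ^ (2*i+2*r+1))" for i
  have "c j = 0"
  proof (rule newton_coeffs_zero[where q = q and C = C and t = t, OF q])
    fix j
    have "norm (a (2*j+r)) \<le> C * q ^ (j*j + (j*j + 2*r*j))"
    proof -
      have "norm (a (2*j+r)) \<le> C * s^(2*j+r) * q powr (real (2*j+r) ^ 2 / 2)" by (rule ab)
      also have "\<dots> \<le> C * 1 * q powr (real (2*j+r) ^ 2 / 2)"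
        using s C0 by (intro mult_right_mono mult_left_mono power_le_one) auto
      also have "q powr (real (2*j+r) ^ 2 / 2) \<le> q powr (real (j*j + (j*j + 2*r*j)))"
      proof (rule powr_mono')
        have "real (2*j+r) ^ 2 / 2 = real (j*j + (j*j + 2*r*j)) + real r ^ 2 / 2"
          by (simp add: power2_eq_square algebra_simps)
        thus "real (j*j + (j*j + 2*r*j)) \<le> real (2*j+r) ^ 2 / 2" by simp
      qed (use q in auto)
      also have "q powr (real (j*j + (j*j + 2*r*j))) = q ^ (j*j + (j*j + 2*r*j))"
        by (rule powr_realpow) (use q in auto)
      finally show ?thesis using C0 by (simp add: mult_left_mono)
    qed
    hence "norm (a (2*j+r)) * Q ^ (j*j + 2*r*j) \<le> C * q ^ (j*j + (j*j + 2*r*j)) * Q ^ (j*j + 2*r*j)"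
      using Q0 by (intro mult_right_mono) auto
    also have "\<dots> = C * q ^ (j*j) * (q ^ (j*j + 2*r*j) * Q ^ (j*j + 2*r*j))"
      by (simp only: power_add mult_ac)
    also have "\<dots> = C * q ^ (j*j)" using Qq by (simp add: mult.commute)
    finally show "norm (c j) \<le> C * q ^ (j*j)"
      unfolding c_def using Q0 by (simp add: norm_mult norm_power)
  next
    fix i
    have "norm (t i) = q ^ (2*i+2*r+1)" unfolding t_def norm_of_real using q by simp
    also have "\<dots> \<le> q ^ i" using q by (intro power_decreasing) auto
    finally show "norm (t i) \<le> q ^ i" .
  next
    fix i m :: nat assume "i < m"
    hence "q ^ (2*m+2*r+1) < q ^ (2*i+2*r+1)" using q by (intro power_strict_decreasing) auto
    thus "t i \<noteq> t m" unfolding t_def by (simp only: of_real_eq_iff)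
  next
    fix N
    define n where "n = 2*N + r"
    define hh where "hh l = a l * complex_of_real ((1 - q) * (1 + (-1)^(l+n)) * mom q \<gamma> (l+n))" for l
    have S: "hh sums 0" unfolding hh_def by (rule MI)
    have sm: "strict_mono (\<lambda>j::nat. 2*j + r)" by (auto simp: strict_mono_def)
    have "(\<lambda>j. hh (2*j + r)) sums 0"
    proof (subst sums_mono_reindex[OF sm])
      show "hh sums 0" by (rule S)
      fix l assume l: "l \<notin> range (\<lambda>j. 2*j + r)"
      have "odd (l + n)"
      proof (rule ccontr)
        assume "\<not> odd (l + n)"
        hence "l = 2 * ((l - r) div 2) + r" using r unfolding n_def by presburger
        thus False using l by blast
      qed
      thus "hh l = 0" unfolding hh_def by simp
    qed
    moreover have "hh (2*j + r) = complex_of_real (2 * (1 - q) * mom q \<gamma> (2*N + 2*r)) *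
        (c j * (\<Prod>i<j. complex_of_real (Q ^ (2*N)) - t i))" for j
    proof -
      have ev: "even (2*j + r + n)" unfolding n_def by simp
      have "(\<Prod>i<j. Q ^ (2*N + 2*r + 1 + 2*i) - 1) = (\<Prod>i<j. Q ^ (2*i+2*r+1) * (Q ^ (2*N) - q ^ (2*i+2*r+1)))"
      proof (intro prod.cong refl)
        fix i
        have "Q ^ (2*N + 2*r + 1 + 2*i) = Q ^ (2*N) * Q ^ (2*i+2*r+1)"
          by (simp add: power_add[symmetric] algebra_simps)
        thus "Q ^ (2*N + 2*r + 1 + 2*i) - 1 = Q ^ (2*i+2*r+1) * (Q ^ (2*N) - q ^ (2*i+2*r+1))"
          using Qq[of "2*i+2*r+1"] by (simp add: algebra_simps)
      qed
      also have "\<dots> = Q ^ (j*j + 2*r*j) * (\<Prod>i<j. Q ^ (2*N) - q ^ (2*i+2*r+1))"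
        by (simp only: prod.distrib power_sum[symmetric] sum_odd_lessThan)
      finally have P: "(\<Prod>i<j. Q ^ (2*N + 2*r + 1 + 2*i) - 1) = Q ^ (j*j + 2*r*j) * (\<Prod>i<j. Q ^ (2*N) - q ^ (2*i+2*r+1))" .
      have "mom q \<gamma> (2*j + r + n) = mom q \<gamma> ((2*N + 2*r) + 2*j)" unfolding n_def by (simp add: algebra_simps)
      also have "\<dots> = mom q \<gamma> (2*N + 2*r) * (\<Prod>i<j. (1/q)^(2*N + 2*r + 1 + 2*i) - 1)"
        by (rule mom_prod[OF q g])
      also have "\<dots> = mom q \<gamma> (2*N + 2*r) * (Q ^ (j*j + 2*r*j) * (\<Prod>i<j. Q ^ (2*N) - q ^ (2*i+2*r+1)))"
        using P by (simp add: Q_def)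
      finally have M: "mom q \<gamma> (2*j + r + n) = mom q \<gamma> (2*N + 2*r) * (Q ^ (j*j + 2*r*j) * (\<Prod>i<j. Q ^ (2*N) - q ^ (2*i+2*r+1)))" .
      have "hh (2*j + r) = a (2*j+r) * complex_of_real ((1 - q) * 2 * mom q \<gamma> (2*j + r + n))"
        unfolding hh_def using ev by simp
      also have "\<dots> = complex_of_real (2 * (1 - q) * mom q \<gamma> (2*N + 2*r)) *
          (a (2*j+r) * complex_of_real (Q ^ (j*j + 2*r*j)) * complex_of_real (\<Prod>i<j. Q ^ (2*N) - q ^ (2*i+2*r+1)))"
        unfolding M by (simp only: of_real_mult mult_ac)
      also have "complex_of_real (\<Prod>i<j. Q ^ (2*N) - q ^ (2*i+2*r+1)) = (\<Prod>i<j. complex_of_real (Q ^ (2*N)) - t i)"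
        unfolding t_def by (simp only: of_real_prod of_real_diff)
      finally show ?thesis unfolding c_def by (simp only: mult_ac)
    qed
    ultimately have "(\<lambda>j. complex_of_real (2 * (1 - q) * mom q \<gamma> (2*N + 2*r)) *
        (c j * (\<Prod>i<j. complex_of_real (Q ^ (2*N)) - t i))) sums 0" by simp
    moreover have "complex_of_real (2 * (1 - q) * mom q \<gamma> (2*N + 2*r)) \<noteq> 0"
      using q mom_pos[OF q g, of "2*N + 2*r"] by (simp del: of_real_mult of_real_diff)
    ultimately have "(\<lambda>j. c j * (\<Prod>i<j. complex_of_real (Q ^ (2*N)) - t i)) sums 0"
      by (rule sums_cancel[where u = "\<lambda>j. c j * (\<Prod>i<j. complex_of_real (Q ^ (2*N)) - t i)"])
    thus "(\<Sum>j. c j * (\<Prod>i<j. complex_of_real ((1/q) ^ (2*N)) - t i)) = 0"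
      unfolding Q_def by (simp add: sums_iff)
  qed
  thus ?thesis unfolding c_def using Q0 by simp
qed


theorem lemma5p10:
  fixes q s \<gamma> :: real and F :: "complex \<Rightarrow> complex"
  assumes "0 < q" "q < 1" "0 < s" "s < 1"
    and "F \<in> M_s q s"
    and "\<gamma> > 0"
    and "\<forall>k::nat. qint_has q \<gamma> (\<lambda>x. F x * x ^ k) 0"
  shows "\<forall>x. \<bar>Im x\<bar> < 1 \<longrightarrow> F x = 0"
proof -
  obtain a C where C0: "C > 0" and ab: "\<forall>l. norm (a l) \<le> C * s ^ l * q powr (real l ^ 2 / 2)"
    and Fr0: "\<forall>x. \<bar>Im x\<bar> < 1 \<longrightarrow> F x = (\<Sum>l. a l * x ^ l) * e_q (q^2) (- (x^2))"
    using assms(5) unfolding M_s_def by blast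
  have Fr: "F (complex_of_real y) = (\<Sum>l. a l * complex_of_real y ^ l) * complex_of_real (Wt q y)" for y
  proof -
    have "\<bar>Im (complex_of_real y)\<bar> < 1" by simp
    hence "F (complex_of_real y) = (\<Sum>l. a l * complex_of_real y ^ l) * e_q (q^2) (- ((complex_of_real y)^2))"
      using Fr0 by blast
    thus ?thesis unfolding eq_real[OF assms(1,2)] .
  qed
  have MI: "(\<lambda>l. a l * complex_of_real ((1 - q) * (1 + (-1)^(l+n)) * mom q \<gamma> (l+n))) sums 0" for n
    by (rule moment_identity[OF assms(1-4) assms(6) _ Fr]) (use ab assms(7) in auto)
  have az: "a l = 0" for l
  proof -
    have "l = 2 * (l div 2) + l mod 2" by simp
    moreover have "a (2 * (l div 2) + l mod 2) = 0"
      by (rule coeff_parity_zero[OF assms(1-4) assms(6) _ MI]) (use ab in auto)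
    ultimately show ?thesis by simp
  qed
  show ?thesis using Fr0 az by simp
qed

end
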